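(* Let $E$ be a Banach lattice. A bounded set $A \subset E$ is almost limited if and only if $T(A)$ is relatively compact in $c_0$ for every disjoint operator $T: E \to c_0$.
   Context: A bounded subset $A$ of a Banach lattice $E$ is almost limited if every disjoint weak* null sequence $(x_n')$ in the dual Banach lattice $E'$ converges uniformly to zero on $A$, i.e. $\sup_{x \in A}|x_n'(x)| \to 0$. Every bounded linear operator $T: E \to c_0$ has the form $T(x) = (x_n'(x))_n$ for a unique weak* null sequence $(x_n') \subset E'$; $T$ is a disjoint operator if $(x_n')$ is disjoint in $E'$. *)

theory Defs
  imports "HOL-Analysis.Analysis"
begin

class banach_lattice = banach + lattice + ordered_real_vector +
  assumes lattice_norm: "sup x (- x) \<le> sup y (- y) \<Longrightarrow> norm x \<le> norm y"

text \<open>Elements of the dual E' are bounded linear functionals E \<Rightarrow> real,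
ordered by the dual cone: f \<le> g iff f x \<le> g x for all x \<ge> 0.\<close>
definition dual_le :: "('a::banach_lattice \<Rightarrow> real) \<Rightarrow> ('a \<Rightarrow> real) \<Rightarrow> bool" where
  "dual_le f g \<longleftrightarrow> (\<forall>x. 0 \<le> x \<longrightarrow> f x \<le> g x)"

definition dual_is_sup :: "('a::banach_lattice \<Rightarrow> real) \<Rightarrow> ('a \<Rightarrow> real) \<Rightarrow> ('a \<Rightarrow> real) \<Rightarrow> bool" where
  "dual_is_sup f g h \<longleftrightarrow> bounded_linear h \<and> dual_le f h \<and> dual_le g h \<and>
     (\<forall>k. bounded_linear k \<and> dual_le f k \<and> dual_le g k \<longrightarrow> dual_le h k)"

definition dual_is_inf :: "('a::banach_lattice \<Rightarrow> real) \<Rightarrow> ('a \<Rightarrow> real) \<Rightarrow> ('a \<Rightarrow> real) \<Rightarrow> bool" where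
  "dual_is_inf f g h \<longleftrightarrow> bounded_linear h \<and> dual_le h f \<and> dual_le h g \<and>
     (\<forall>k. bounded_linear k \<and> dual_le k f \<and> dual_le k g \<longrightarrow> dual_le k h)"

definition dual_disjoint :: "('a::banach_lattice \<Rightarrow> real) \<Rightarrow> ('a \<Rightarrow> real) \<Rightarrow> bool" where
  "dual_disjoint f g \<longleftrightarrow> (\<exists>a b. dual_is_sup f (\<lambda>x. - f x) a \<and> dual_is_sup g (\<lambda>x. - g x) b
      \<and> dual_is_inf a b (\<lambda>x. 0))"

definition almost_limited :: "'a::banach_lattice set \<Rightarrow> bool" where
  "almost_limited A \<longleftrightarrow> bounded A \<and>
    (\<forall>x' :: nat \<Rightarrow> 'a \<Rightarrow> real.
       (\<forall>n. bounded_linear (x' n)) \<and>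
       (\<forall>x. (\<lambda>n. x' n x) \<longlonglongrightarrow> 0) \<and>
       (\<forall>n m. n \<noteq> m \<longrightarrow> dual_disjoint (x' n) (x' m))
       \<longrightarrow> (\<forall>\<epsilon>>0. \<exists>N. \<forall>n\<ge>N. \<forall>x\<in>A. \<bar>x' n x\<bar> < \<epsilon>))"

text \<open>c_0 is realized as the closed subspace of l^\<infinity> = bounded sequences of
null sequences.\<close>
definition disjoint_operator_c0 :: "('a::banach_lattice \<Rightarrow> (nat \<Rightarrow>\<^sub>C real)) \<Rightarrow> bool" where
  "disjoint_operator_c0 T \<longleftrightarrow> bounded_linear T \<and>
     (\<forall>x. (\<lambda>n. apply_bcontfun (T x) n) \<longlonglongrightarrow> 0) \<and>
     (\<forall>n m. n \<noteq> m \<longrightarrow> dual_disjoint (\<lambda>x. apply_bcontfun (T x) n) (\<lambda>x. apply_bcontfun (T x) m))"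

end

theory Submission
  imports Defs
begin

lemma nat_bcontfun_mem:
  fixes f :: "nat \<Rightarrow> real"
  assumes "\<And>n. \<bar>f n\<bar> \<le> B"
  shows "f \<in> bcontfun"
  by (rule bcontfun_normI[where b=B]) (auto simp: assms)

lemma ubp:
  fixes f :: "nat \<Rightarrow> 'a::banach \<Rightarrow> real"
  assumes bl: "\<And>n. bounded_linear (f n)" and pb: "\<And>x. \<exists>B. \<forall>n. \<bar>f n x\<bar> \<le> B"
  shows "\<exists>M. \<forall>n x. \<bar>f n x\<bar> \<le> M * norm x"
proof -
  define F where "F k = (\<Inter>n. {x. \<bar>f n x\<bar> \<le> real k})" for k :: nat
  have cl: "closed (F k)" for k
    unfolding F_def
  proof (intro closed_INT ballI closed_Collect_le continuous_intros)
    fix n show "continuous_on UNIV (f n)"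
      using bl by (simp add: linear_continuous_on)
  qed
  have un0: "UNIV \<subseteq> \<Union>(range F)"
  proof
    fix x
    obtain B where B: "\<forall>n. \<bar>f n x\<bar> \<le> B" using pb by blast
    have "B \<le> real (nat \<lceil>B\<rceil>)" by linarith
    then have "x \<in> F (nat \<lceil>B\<rceil>)" using B unfolding F_def by (auto intro: order_trans)
    then show "x \<in> \<Union>(range F)" by blast
  qed
  then have un: "\<Union>(range F) = UNIV" by auto
  have "\<exists>k. interior (F k) \<noteq> {}"
  proof (rule ccontr)
    assume "\<not> ?thesis"
    then have "euclidean interior_of \<Union>(range F) = {}"
      by (intro Baire_category_alt) (auto simp: completely_metrizable_space_euclidean cl interior_of_def interior_def)
    then show False using un open_UNIV by (simp add: interior_of_def) blast
  qed
  then obtain k x0 where "x0 \<in> interior (F k)" by blast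
  then obtain r where r: "r > 0" "ball x0 r \<subseteq> F k"
    by (meson mem_interior)
  have "\<bar>f n x\<bar> \<le> (4 * real k / r) * norm x" for n x
  proof (cases "x = 0")
    case True then show ?thesis using bl[of n] by (simp add: linear_simps)
  next
    case False
    then have nx: "norm x > 0" by simp
    define c where "c = r / (2 * norm x)"
    have c: "c > 0" using nx r by (simp add: c_def)
    define y where "y = c *\<^sub>R x"
    have ny: "norm y = r / 2" using nx c r by (simp add: y_def c_def)
    have "x0 + y \<in> ball x0 r" using ny r by (simp add: dist_norm)
    then have h1: "\<bar>f n (x0 + y)\<bar> \<le> real k" using r unfolding F_def by blast
    have "x0 \<in> ball x0 r" using r by simp
    then have h2: "\<bar>f n x0\<bar> \<le> real k" using r unfolding F_def by blast
    have "f n (x0 + y) = f n x0 + c * f n x"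
      using bl[of n] by (simp add: y_def linear_simps)
    then have "c * \<bar>f n x\<bar> \<le> 2 * real k" using h1 h2 c by (simp add: abs_mult)
    then have "\<bar>f n x\<bar> \<le> 2 * real k / c" using c by (simp add: field_simps)
    also have "2 * real k / c = (4 * real k / r) * norm x" using r nx by (simp add: c_def field_simps)
    finally show ?thesis .
  qed
  then show ?thesis by blast
qed

definition unitv :: "nat \<Rightarrow> (nat \<Rightarrow>\<^sub>C real)" where
  "unitv j = Bcontfun (\<lambda>n. if n = j then 1 else 0)"

lemma unitv_apply [simp]: "apply_bcontfun (unitv j) n = (if n = j then 1 else 0)"
  unfolding unitv_def by (subst Bcontfun_inverse) (auto intro!: nat_bcontfun_mem[where B=1])

definition boxK :: "real \<Rightarrow> nat \<Rightarrow> (nat \<Rightarrow>\<^sub>C real) set" where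
  "boxK R N = {g. (\<forall>n. \<bar>apply_bcontfun g n\<bar> \<le> R) \<and> (\<forall>n\<ge>N. apply_bcontfun g n = 0)}"

lemma boxK_compact:
  assumes "R \<ge> 0" shows "compact (boxK R N)"
proof (induction N)
  case 0
  have "boxK R 0 = {0}" using assms by (auto simp: boxK_def intro!: bcontfun_eqI)
  then show ?case by simp
next
  case (Suc N)
  have eq: "boxK R (Suc N) = (\<lambda>z. fst z + snd z *\<^sub>R unitv N) ` (boxK R N \<times> {-R..R})"
  proof (rule set_eqI, rule iffI)
    fix g assume g: "g \<in> boxK R (Suc N)"
    define h where "h = g - apply_bcontfun g N *\<^sub>R unitv N"
    have "h \<in> boxK R N" using g assms by (auto simp: boxK_def h_def)
    moreover have "\<bar>apply_bcontfun g N\<bar> \<le> R" using g unfolding boxK_def by blast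
    then have "apply_bcontfun g N \<in> {-R..R}" by (auto simp: abs_le_iff)
    moreover have "g = h + apply_bcontfun g N *\<^sub>R unitv N" by (simp add: h_def)
    ultimately show "g \<in> (\<lambda>z. fst z + snd z *\<^sub>R unitv N) ` (boxK R N \<times> {-R..R})"
      by (intro image_eqI[where x="(h, apply_bcontfun g N)"]) auto
  next
    fix g assume "g \<in> (\<lambda>z. fst z + snd z *\<^sub>R unitv N) ` (boxK R N \<times> {-R..R})"
    then obtain h t where ht: "h \<in> boxK R N" "t \<in> {-R..R}" "g = h + t *\<^sub>R unitv N" by auto
    show "g \<in> boxK R (Suc N)" using ht by (auto simp: boxK_def abs_le_iff)
  qed
  have "compact ((\<lambda>z. fst z + snd z *\<^sub>R unitv N) ` (boxK R N \<times> {-R..R}))"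
    by (intro compact_continuous_image compact_Times Suc.IH compact_Icc continuous_intros)
  then show ?case using eq by simp
qed

lemma bcontfun_cauchy_conv:
  fixes f :: "nat \<Rightarrow> (nat \<Rightarrow>\<^sub>C real)"
  assumes "Cauchy f" shows "convergent f"
proof -
  obtain g where "uniform_limit UNIV f g sequentially"
    using uniformly_convergent_eq_cauchy[of "\<lambda>_. True" f] assms
    unfolding Cauchy_def uniform_limit_sequentially_iff
    by (metis dist_fun_lt_imp_dist_val_lt)
  from uniform_limit_bcontfunE[OF this sequentially_bot]
  obtain l' where "g = apply_bcontfun l'" "(f \<longlonglongrightarrow> l')" by metis
  then show "convergent f"
    by (intro convergentI)
qed

lemma bcontfun_closure_complete: "complete (closure (S :: (nat \<Rightarrow>\<^sub>C real) set))"
proof (rule completeI)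
  fix f :: "nat \<Rightarrow> (nat \<Rightarrow>\<^sub>C real)"
  assume "\<forall>n. f n \<in> closure S" "Cauchy f"
  then obtain l where "f \<longlonglongrightarrow> l" using bcontfun_cauchy_conv convergent_def by blast
  moreover have "l \<in> closure S"
    using closed_sequentially[OF closed_closure] \<open>\<forall>n. f n \<in> closure S\<close> calculation by blast
  ultimately show "\<exists>l\<in>closure S. f \<longlonglongrightarrow> l" by blast
qed

lemma c0_compact:
  fixes S :: "(nat \<Rightarrow>\<^sub>C real) set"
  assumes bS: "bounded S" and tails: "\<And>e. e > 0 \<Longrightarrow> \<exists>N. \<forall>n\<ge>N. \<forall>g\<in>S. \<bar>apply_bcontfun g n\<bar> < e"
  shows "compact (closure S)"
  unfolding compact_eq_totally_bounded
proof (intro conjI allI impI)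
  show "complete (closure S)" by (rule bcontfun_closure_complete)
  fix e :: real assume e: "e > 0"
  obtain N where N: "\<forall>n\<ge>N. \<forall>g\<in>S. \<bar>apply_bcontfun g n\<bar> < e / 4" using tails[of "e/4"] e by auto
  obtain R0 where R0: "\<forall>g\<in>S. norm g \<le> R0" using bS by (auto simp: bounded_iff)
  define R where "R = max R0 0"
  have R: "R \<ge> 0" "\<forall>g\<in>S. norm g \<le> R" using R0 by (auto simp: R_def intro: order_trans)
  obtain k where k: "finite k" "boxK R N \<subseteq> (\<Union>x\<in>k. ball x (e/4))"
    using boxK_compact[OF R(1), of N] e unfolding compact_eq_totally_bounded
    by (meson divide_pos_pos zero_less_numeral)
  have Sk: "\<exists>c\<in>k. dist g c < e / 2" if g: "g \<in> S" for g
  proof -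
    define p where "p = Bcontfun (\<lambda>n. if n < N then apply_bcontfun g n else 0)"
    have gb: "\<bar>apply_bcontfun g n\<bar> \<le> R" for n
      using norm_bounded[of g n] R g by (auto intro: order_trans)
    have papp: "apply_bcontfun p n = (if n < N then apply_bcontfun g n else 0)" for n
      unfolding p_def by (subst Bcontfun_inverse) (auto intro!: nat_bcontfun_mem[where B=R] simp: gb R)
    have "p \<in> boxK R N" using gb R by (auto simp: boxK_def papp)
    then obtain c where c: "c \<in> k" "dist c p < e / 4" using k by auto
    have "dist g p \<le> e / 4"
    proof (rule dist_bound)
      fix n show "dist (apply_bcontfun g n) (apply_bcontfun p n) \<le> e / 4"
        using N g e by (cases "n < N") (auto simp: papp dist_real_def less_imp_le)
    qed
    then have "dist g c < e / 2" using c dist_triangle[of g c p] by (simp add: dist_commute)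
    then show ?thesis using c by blast
  qed
  show "\<exists>k. finite k \<and> closure S \<subseteq> (\<Union>x\<in>k. ball x e)"
  proof (intro exI conjI)
    show "finite k" by fact
    show "closure S \<subseteq> (\<Union>x\<in>k. ball x e)"
    proof
      fix z assume "z \<in> closure S"
      then obtain g where g: "g \<in> S" "dist g z < e / 2"
        using e by (meson closure_approachable half_gt_zero)
      obtain c where c: "c \<in> k" "dist g c < e / 2" using Sk[OF g(1)] by blast
      have "dist c z < e" using g c dist_triangle[of c z g] by (simp add: dist_commute)
      then show "z \<in> (\<Union>x\<in>k. ball x e)" using c by auto
    qed
  qed
qed

theorem mainTheorem6:
  fixes A :: "'a::banach_lattice set"
  assumes "bounded A"
  shows "almost_limited A \<longleftrightarrow>
    (\<forall>T :: 'a \<Rightarrow> (nat \<Rightarrow>\<^sub>C real). disjoint_operator_c0 T \<longrightarrow> compact (closure (T ` A)))"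
proof
  assume AL: "almost_limited A"
  show "\<forall>T :: 'a \<Rightarrow> (nat \<Rightarrow>\<^sub>C real). disjoint_operator_c0 T \<longrightarrow> compact (closure (T ` A))"
  proof (intro allI impI)
    fix T :: "'a \<Rightarrow> (nat \<Rightarrow>\<^sub>C real)"
    assume D: "disjoint_operator_c0 T"
    then have blT: "bounded_linear T" by (simp add: disjoint_operator_c0_def)
    obtain K where K: "\<And>x. norm (T x) \<le> norm x * K"
      using bounded_linear.bounded[OF blT] by blast
    define x' where "x' n = (\<lambda>x. apply_bcontfun (T x) n)" for n
    have bl: "bounded_linear (x' n)" for n
    proof (rule bounded_linear_intro[where K=K])
      fix x y show "x' n (x + y) = x' n x + x' n y"
        using blT by (simp add: x'_def linear_simps)
    next
      fix r x show "x' n (r *\<^sub>R x) = r *\<^sub>R x' n x"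
        using blT by (simp add: x'_def linear_simps)
    next
      fix x show "norm (x' n x) \<le> norm x * K"
        using norm_bounded[of "T x" n] K[of x] by (simp add: x'_def)
    qed
    have "\<forall>\<epsilon>>0. \<exists>N. \<forall>n\<ge>N. \<forall>x\<in>A. \<bar>x' n x\<bar> < \<epsilon>"
    proof -
      have "(\<forall>n. bounded_linear (x' n)) \<and> (\<forall>x. (\<lambda>n. x' n x) \<longlonglongrightarrow> 0) \<and>
         (\<forall>n m. n \<noteq> m \<longrightarrow> dual_disjoint (x' n) (x' m))"
        using D bl unfolding disjoint_operator_c0_def x'_def by simp
      moreover have "\<forall>y :: nat \<Rightarrow> 'a \<Rightarrow> real. (\<forall>n. bounded_linear (y n)) \<and> (\<forall>x. (\<lambda>n. y n x) \<longlonglongrightarrow> 0) \<and>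
         (\<forall>n m. n \<noteq> m \<longrightarrow> dual_disjoint (y n) (y m)) \<longrightarrow> (\<forall>\<epsilon>>0. \<exists>N. \<forall>n\<ge>N. \<forall>x\<in>A. \<bar>y n x\<bar> < \<epsilon>)"
        using AL unfolding almost_limited_def by (rule conjunct2)
      ultimately show ?thesis by (rule mp[OF spec[where x=x'], rotated])
    qed
    then have tails: "\<exists>N. \<forall>n\<ge>N. \<forall>g\<in>T ` A. \<bar>apply_bcontfun g n\<bar> < e" if "e > 0" for e
      using that by (auto simp: x'_def)
    show "compact (closure (T ` A))"
      by (rule c0_compact[OF bounded_linear_image[OF assms blT] tails])
  qed
next
  assume H: "\<forall>T :: 'a \<Rightarrow> (nat \<Rightarrow>\<^sub>C real). disjoint_operator_c0 T \<longrightarrow> compact (closure (T ` A))"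
  show "almost_limited A"
    unfolding almost_limited_def
  proof (intro conjI assms allI impI)
    fix x' :: "nat \<Rightarrow> 'a \<Rightarrow> real" and e :: real
    assume hyp: "(\<forall>n. bounded_linear (x' n)) \<and> (\<forall>x. (\<lambda>n. x' n x) \<longlonglongrightarrow> 0) \<and>
       (\<forall>n m. n \<noteq> m \<longrightarrow> dual_disjoint (x' n) (x' m))"
    assume e: "e > 0"
    have bl: "\<And>n. bounded_linear (x' n)" and lim: "\<And>x. (\<lambda>n. x' n x) \<longlonglongrightarrow> 0"
      and dj: "\<And>n m. n \<noteq> m \<Longrightarrow> dual_disjoint (x' n) (x' m)" using hyp by auto
    have pb: "\<exists>B. \<forall>n. \<bar>x' n x\<bar> \<le> B" for x
    proof -
      have "Bseq (\<lambda>n. x' n x)" using lim[of x] by (intro convergent_imp_Bseq convergentI)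
      then show ?thesis unfolding Bseq_def by auto
    qed
    obtain M where M: "\<And>n x. \<bar>x' n x\<bar> \<le> M * norm x" using ubp[OF bl pb] by blast
    have mem: "(\<lambda>n. x' n x) \<in> bcontfun" for x
    proof -
      obtain B where "\<forall>n. \<bar>x' n x\<bar> \<le> B" using pb by blast
      then show ?thesis by (intro nat_bcontfun_mem[where B=B]) auto
    qed
    define T where "T x = Bcontfun (\<lambda>n. x' n x)" for x
    have Tapp: "apply_bcontfun (T x) n = x' n x" for x n
      unfolding T_def using mem[of x] by (simp add: Bcontfun_inverse)
    have Tfun: "apply_bcontfun (T x) = (\<lambda>n. x' n x)" for x
      by (rule ext) (simp add: Tapp)
    have blT: "bounded_linear T"
    proof (rule bounded_linear_intro[where K=M])
      fix x y show "T (x + y) = T x + T y"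
        by (rule bcontfun_eqI) (use bl in \<open>simp add: Tapp linear_simps\<close>)
    next
      fix r x show "T (r *\<^sub>R x) = r *\<^sub>R T x"
        by (rule bcontfun_eqI) (use bl in \<open>simp add: Tapp linear_simps\<close>)
    next
      fix x show "norm (T x) \<le> norm x * M"
        by (rule norm_bound) (use M in \<open>auto simp: Tapp mult.commute\<close>)
    qed
    have "disjoint_operator_c0 T"
      unfolding disjoint_operator_c0_def using blT lim dj by (simp add: Tfun)
    then have cK: "compact (closure (T ` A))" using H by blast
    have "closure (T ` A) \<subseteq> (\<Union>c\<in>A. ball (T c) (e/2))"
    proof
      fix z assume "z \<in> closure (T ` A)"
      then obtain g where "g \<in> T ` A" "dist g z < e / 2"
        using e by (meson closure_approachable half_gt_zero)
      then show "z \<in> (\<Union>c\<in>A. ball (T c) (e/2))" by auto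
    qed
    then obtain D where D: "D \<subseteq> A" "finite D" "closure (T ` A) \<subseteq> (\<Union>c\<in>D. ball (T c) (e/2))"
      using compactE_image[OF cK, of A "\<lambda>c. ball (T c) (e/2)"] by auto
    have "\<forall>d\<in>D. \<exists>N. \<forall>n\<ge>N. \<bar>x' n d\<bar> < e/2"
    proof
      fix d assume "d \<in> D"
      have "\<forall>r>0. \<exists>no. \<forall>n\<ge>no. \<bar>x' n d\<bar> < r"
        using lim[of d] unfolding lim_sequentially by (simp add: dist_real_def)
      then show "\<exists>N. \<forall>n\<ge>N. \<bar>x' n d\<bar> < e/2" using e by (meson half_gt_zero)
    qed
    then obtain Nf where Nf: "\<And>d n. d \<in> D \<Longrightarrow> n \<ge> Nf d \<Longrightarrow> \<bar>x' n d\<bar> < e/2"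
      by metis
    define N where "N = Max (insert 0 (Nf ` D))"
    have NN: "Nf d \<le> N" if "d \<in> D" for d
      unfolding N_def using D(2) that by (intro Max_ge) auto
    show "\<exists>N. \<forall>n\<ge>N. \<forall>x\<in>A. \<bar>x' n x\<bar> < e"
    proof (intro exI allI impI ballI)
      fix n x assume n: "N \<le> n" and x: "x \<in> A"
      have "T x \<in> closure (T ` A)" using x closure_subset by blast
      then obtain d where d: "d \<in> D" "dist (T d) (T x) < e/2" using D(3) by auto
      have "dist (x' n d) (x' n x) < e/2"
        using dist_fun_lt_imp_dist_val_lt[OF d(2), of n] by (simp add: Tapp)
      moreover have "\<bar>x' n d\<bar> < e/2" using Nf[OF d(1)] NN[OF d(1)] n by auto
      ultimately have h: "\<bar>x' n d - x' n x\<bar> < e/2" "\<bar>x' n d\<bar> < e/2" by (simp_all add: dist_real_def)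
      then show "\<bar>x' n x\<bar> < e" by arith
    qed
  qed
qed

end
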